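(* Let $G$ be a finite abstract simplicial complex. Then $w(B(x))=1$ for every $x \in G$.
   Context: A finite abstract simplicial complex $G$ is a finite set of non-empty finite sets such that every non-empty subset of an element of $G$ is again in $G$. For $y\in G$, $w(y)=(-1)^{|y|-1}$, and for $A\subset G$, $w(A)=\sum_{y\in A}w(y)$. $G$ carries the finite topology whose basis consists of the stars $U(x)=\{y\in G : x\subset y\}$. The unit ball $B(x)$ is the closure of $U(x)$ in this topology, i.e. $B(x)=\{y\in G : y\subset z \text{ for some } z\in G \text{ with } x\subset z\}$. *)

theory Defs
  imports Main
begin

definition simplicial_complex :: "'a set set \<Rightarrow> bool" where
  "simplicial_complex G \<longleftrightarrow> finite G \<and>
     (\<forall>x\<in>G. x \<noteq> {} \<and> finite x) \<and>
     (\<forall>x\<in>G. \<forall>y. y \<subseteq> x \<and> y \<noteq> {} \<longrightarrow> y \<in> G)"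

definition wsimp :: "'a set \<Rightarrow> int" where
  "wsimp y = (-1) ^ (card y - 1)"

definition wset :: "'a set set \<Rightarrow> int" where
  "wset A = (\<Sum>y\<in>A. wsimp y)"

text \<open>Star U(x) and unit ball B(x) (closure of the star in the finite topology).\<close>
definition star :: "'a set set \<Rightarrow> 'a set \<Rightarrow> 'a set set" where
  "star G x = {y \<in> G. x \<subseteq> y}"

definition unit_ball :: "'a set set \<Rightarrow> 'a set \<Rightarrow> 'a set set" where
  "unit_ball G x = {y \<in> G. \<exists>z\<in>G. y \<subseteq> z \<and> x \<subseteq> z}"

end

theory Submission
  imports Defs
begin

lemma wsimp_insert:
  assumes "finite y" "y \<noteq> {}" "v \<notin> y"
  shows "wsimp (insert v y) = - wsimp y"
proof -
  have c: "card y \<ge> 1" using assms by (simp add: Suc_leI card_gt_0_iff)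
  have "card (insert v y) - 1 = Suc (card y - 1)" using assms c by simp
  then show ?thesis unfolding wsimp_def by simp
qed

theorem mainTheorem3:
  fixes G :: "'a set set"
  assumes "simplicial_complex G" and "x \<in> G"
  shows "wset (unit_ball G x) = 1"
proof -
  define B where "B = unit_ball G x"
  have fG: "finite G" and ne: "\<And>y. y \<in> G \<Longrightarrow> y \<noteq> {} \<and> finite y"
    and cl: "\<And>y z. z \<in> G \<Longrightarrow> y \<subseteq> z \<Longrightarrow> y \<noteq> {} \<Longrightarrow> y \<in> G"
    using assms(1) unfolding simplicial_complex_def by blast+
  obtain v where v: "v \<in> x" using ne[OF assms(2)] by blast
  have BG: "B \<subseteq> G" unfolding B_def unit_ball_def by auto
  have fB: "finite B" using BG fG finite_subset by blast
  define A where "A = {y\<in>B. v \<notin> y}"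
  define C where "C = {y\<in>B. v \<in> y}"
  have vB: "{v} \<in> B" unfolding B_def unit_ball_def using assms(2) v cl[of x "{v}"] by auto
  have AB: "A \<subseteq> B" "C \<subseteq> B" unfolding A_def C_def by auto
  have fA: "finite A" "finite C" using AB fB finite_subset by blast+
  have split: "wset B = wset A + wset C"
    unfolding wset_def A_def C_def
  proof -
    have "{y\<in>B. v \<notin> y} \<union> {y\<in>B. v \<in> y} = B" by auto
    moreover have "sum wsimp ({y\<in>B. v \<notin> y} \<union> {y\<in>B. v \<in> y}) = sum wsimp {y\<in>B. v \<notin> y} + sum wsimp {y\<in>B. v \<in> y}"
      by (rule sum.union_disjoint) (use fB in auto)
    ultimately show "sum wsimp B = sum wsimp {y\<in>B. v \<notin> y} + sum wsimp {y\<in>B. v \<in> y}"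
      by (simp only:)
  qed
  have ins: "insert v y \<in> B" if "y \<in> A" for y
  proof -
    from that obtain z where z: "z \<in> G" "y \<subseteq> z" "x \<subseteq> z" unfolding A_def B_def unit_ball_def by auto
    have "insert v y \<subseteq> z" using z v by auto
    then have "insert v y \<in> G" using cl[OF z(1)] by blast
    then show ?thesis using z \<open>insert v y \<subseteq> z\<close> unfolding B_def unit_ball_def by auto
  qed
  have img: "C - {{v}} = insert v ` A"
  proof
    show "C - {{v}} \<subseteq> insert v ` A"
    proof
      fix y assume y: "y \<in> C - {{v}}"
      then obtain z where z: "z \<in> G" "y \<subseteq> z" "x \<subseteq> z" "v \<in> y" "y \<noteq> {v}"
        unfolding C_def B_def unit_ball_def by auto
      have "y - {v} \<noteq> {}" using z by auto
      moreover have "y - {v} \<subseteq> z" using z by auto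
      ultimately have yG: "y - {v} \<in> G" using cl[OF z(1)] by blast
      have "y - {v} \<in> B" unfolding B_def unit_ball_def using yG z by blast
      then have "y - {v} \<in> A" unfolding A_def by simp
      moreover have "y = insert v (y - {v})" using z by auto
      ultimately show "y \<in> insert v ` A" by blast
    qed
  next
    show "insert v ` A \<subseteq> C - {{v}}"
    proof
      fix w assume "w \<in> insert v ` A"
      then obtain y where y: "y \<in> A" "w = insert v y" by blast
      have "y \<noteq> {}" "v \<notin> y" using y ne BG unfolding A_def by auto
      then have "w \<noteq> {v}" using y by auto
      then show "w \<in> C - {{v}}" using ins[OF y(1)] y unfolding C_def by auto
    qed
  qed
  have inj: "inj_on (insert v) A"
  proof (rule inj_onI)
    fix a b assume "a \<in> A" "b \<in> A" "insert v a = insert v b"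
    then have "v \<notin> a" "v \<notin> b" unfolding A_def by auto
    have "a = insert v a - {v}" using \<open>v \<notin> a\<close> by simp
    also have "\<dots> = insert v b - {v}" using \<open>insert v a = insert v b\<close> by simp
    also have "\<dots> = b" using \<open>v \<notin> b\<close> by simp
    finally show "a = b" .
  qed
  have "wset (C - {{v}}) = (\<Sum>y\<in>A. wsimp (insert v y))"
    unfolding wset_def img by (simp add: sum.reindex[OF inj])
  also have "\<dots> = (\<Sum>y\<in>A. - wsimp y)"
  proof (rule sum.cong)
    fix y assume "y \<in> A"
    then show "wsimp (insert v y) = - wsimp y"
    proof -
      have "y \<in> G" "v \<notin> y" using \<open>y \<in> A\<close> BG unfolding A_def by auto
      then show ?thesis using ne[of y] wsimp_insert[of y v] by blast
    qed
  qed simp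
  also have "\<dots> = - wset A" unfolding wset_def by (simp add: sum_negf)
  finally have m: "wset (C - {{v}}) = - wset A" .
  have vC: "{v} \<in> C" using vB unfolding C_def by auto
  have "wset C = wsimp {v} + wset (C - {{v}})"
    unfolding wset_def using fA(2) vC by (meson sum.remove)
  then have "wset C = 1 - wset A" using m by (simp add: wsimp_def)
  then show ?thesis using split B_def by simp
qed

end
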